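(* For every integer $n\ge0$, the number $e_n$ of walks $0=y_0,y_1,\dots,y_n=0$ with $y_i-y_{i-1}\in\{-2,-1,+1,+2\}$ for all $i$ and $y_i\ge0$ for all $i$ (basketball excursions of length $n$) is $$e_n=\frac{1}{n+1}\sum_{k=0}^{n}(-1)^{n+k}\binom{2n+2}{n-k}\binom{n+2k+1}{k}=\frac1{n+1}\sum_{i=0}^{\lfloor n/2\rfloor}\binom{2n+2}{i}\binom{n-i-1}{n-2i}.$$
   Context: For integers $a$ and $b$, $\binom ab=a(a-1)\cdots(a-b+1)/b!$ if $b\ge0$ (so $\binom{-1}{0}=1$) and $\binom ab=0$ if $b<0$. *)

theory Defs
  imports Complex_Main
begin

definition ibinom :: "int \<Rightarrow> int \<Rightarrow> real" where
  "ibinom a b = (if b < 0 then 0 else (real_of_int a) gchoose (nat b))"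

(* Basketball excursions of length n: walks y_0,...,y_n (y : nat => int)
   with y_0 = 0, y_n = 0, steps in {-2,-1,1,2}, and y_i >= 0.
   A walk is determined by its values on {0..n}; we identify it with the
   list [y_0, ..., y_n]. *)
definition basketball_excursions :: "nat \<Rightarrow> int list set" where
  "basketball_excursions n = {ys. length ys = n + 1 \<and> ys ! 0 = 0 \<and> ys ! n = 0
      \<and> (\<forall>i\<in>{1..n}. ys ! i - ys ! (i - 1) \<in> {-2, -1, 1, 2})
      \<and> (\<forall>i\<le>n. ys ! i \<ge> 0)}"

end

theory Submission
  imports Defs "HOL-Computational_Algebra.Formal_Power_Series"
begin
unbundle fps_syntax



lemma compose_mult_nth:
  fixes A R Q :: "'a::comm_ring_1 fps"
  assumes R0: "R $ 0 = 0"
  shows "((A oo R) * Q) $ n = (\<Sum>i=0..n. A $ i * (R ^ i * Q) $ n)"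
proof -
  have c: "(A oo R) $ j = (\<Sum>i=0..n. A $ i * (R ^ i) $ j)" if "j \<le> n" for j
  proof -
    have "(A oo R) $ j = (\<Sum>i=0..j. A $ i * (R ^ i) $ j)" by (simp add: fps_compose_nth)
    also have "\<dots> = (\<Sum>i=0..n. A $ i * (R ^ i) $ j)"
      by (rule sum.mono_neutral_left) (use that startsby_zero_power_prefix[OF R0] in auto)
    finally show ?thesis .
  qed
  have "((A oo R) * Q) $ n = (\<Sum>j=0..n. (A oo R) $ j * Q $ (n - j))" by (simp add: fps_mult_nth)
  also have "\<dots> = (\<Sum>j=0..n. \<Sum>i=0..n. A $ i * (R ^ i) $ j * Q $ (n - j))"
    by (intro sum.cong refl) (simp add: c sum_distrib_right)
  also have "\<dots> = (\<Sum>i=0..n. \<Sum>j=0..n. A $ i * (R ^ i) $ j * Q $ (n - j))"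
    by (rule sum.swap)
  also have "\<dots> = (\<Sum>i=0..n. A $ i * (R ^ i * Q) $ n)"
    by (simp add: fps_mult_nth sum_distrib_left mult.assoc)
  finally show ?thesis .
qed

lemma R0_of:
  fixes R phi :: "'a::idom fps"
  assumes Rphi: "R * phi = fps_X" and p0: "phi $ 0 \<noteq> 0"
  shows "R $ 0 = 0"
proof -
  have "(R * phi) $ 0 = 0" using Rphi by simp
  hence "R $ 0 * phi $ 0 = 0" by simp
  thus ?thesis using p0 by simp
qed

lemma key_coeff:
  fixes R phi :: "real fps"
  assumes Rphi: "R * phi = fps_X" and p0: "phi $ 0 \<noteq> 0"
  shows "(fps_deriv R * phi ^ (Suc j)) $ j = (if j = 0 then 1 else 0)"
proof -
  have R0: "R $ 0 = 0" by (rule R0_of[OF Rphi p0])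
  have d: "fps_deriv R * phi + R * fps_deriv phi = 1"
  proof -
    have "fps_deriv (R * phi) = 1" using Rphi by simp
    thus ?thesis by (simp add: algebra_simps)
  qed
  have Z: "fps_deriv R * phi ^ (Suc j) = phi ^ j - phi ^ j * R * fps_deriv phi"
  proof -
    have "fps_deriv R * phi ^ (Suc j) = phi ^ j * (fps_deriv R * phi)" by (simp add: algebra_simps)
    also have "\<dots> = phi ^ j * (1 - R * fps_deriv phi)"
      using d by (metis add_diff_cancel_right')
    finally show ?thesis by (simp add: right_diff_distrib mult.assoc)
  qed
  show ?thesis
  proof (cases j)
    case 0
    then show ?thesis using Z R0 by (simp add: fps_mult_nth)
  next
    case (Suc i)
    have pj: "phi ^ j * R = fps_X * phi ^ i" using Suc Rphi by (simp add: algebra_simps)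
    have dj: "fps_deriv (phi ^ j) = fps_const (of_nat j) * fps_deriv phi * phi ^ i"
      using Suc by (simp only: fps_deriv_power diff_Suc_1)
    have "of_nat j * (fps_deriv R * phi ^ (Suc j)) = fps_const (of_nat j) * phi ^ j - fps_X * fps_deriv (phi ^ j)"
      unfolding Z dj using pj by (simp add: algebra_simps fps_of_nat)
    have jp: "j > 0" using Suc by simp
    have "(fps_const (of_nat j) * phi ^ j - fps_X * fps_deriv (phi ^ j)) $ j = 0"
      using jp by (simp add: fps_X_mult_nth del: power_Suc)
    hence "(of_nat j * (fps_deriv R * phi ^ (Suc j))) $ j = 0"
      by (simp only: \<open>of_nat j * (fps_deriv R * phi ^ (Suc j)) = _\<close>)
    hence "of_nat j * (fps_deriv R * phi ^ (Suc j)) $ j = 0"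
      by (simp add: fps_of_nat del: power_Suc)
    then show ?thesis using Suc by simp
  qed
qed

lemma lagrange_buermann:
  fixes R phi G H :: "real fps"
  assumes Rphi: "R * phi = fps_X" and p0: "phi $ 0 \<noteq> 0"
    and GR: "G oo R = fps_X" and m: "m > 0"
  shows "of_nat m * (H oo G) $ m = (fps_deriv H * phi ^ m) $ (m - 1)"
proof -
  have R0: "R $ 0 = 0" by (rule R0_of[OF Rphi p0])
  have G0: "G $ 0 = 0" using arg_cong[OF GR, of "\<lambda>f. f $ 0"] by simp
  define F where "F = H oo G"
  have FR: "F oo R = H"
    unfolding F_def using fps_compose_assoc[OF R0 G0, of H] GR by simp
  have dH: "fps_deriv H = (fps_deriv F oo R) * fps_deriv R"
    using fps_compose_deriv[OF R0, of F] FR by simp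
  obtain k where k: "m = Suc k" using m by (cases m) auto
  have "(fps_deriv H * phi ^ m) $ k = ((fps_deriv F oo R) * (fps_deriv R * phi ^ m)) $ k"
    by (simp add: dH mult.assoc)
  also have "\<dots> = (\<Sum>i=0..k. fps_deriv F $ i * (R ^ i * (fps_deriv R * phi ^ m)) $ k)"
    by (rule compose_mult_nth[OF R0])
  also have "\<dots> = (\<Sum>i=0..k. (if i = k then fps_deriv F $ i else 0))"
  proof (intro sum.cong refl)
    fix i assume i: "i \<in> {0..k}"
    define j where "j = k - i"
    have mi: "m = i + Suc j" using i k j_def by auto
    have eq: "R ^ i * (fps_deriv R * phi ^ m) = fps_X ^ i * (fps_deriv R * phi ^ Suc j)"
    proof -
      have "R ^ i * (fps_deriv R * phi ^ m) = (R * phi) ^ i * (fps_deriv R * phi ^ Suc j)"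
        unfolding mi power_add power_mult_distrib by (simp only: mult_ac)
      thus ?thesis unfolding Rphi .
    qed
    have "(R ^ i * (fps_deriv R * phi ^ m)) $ k = (fps_deriv R * phi ^ Suc j) $ j"
      unfolding eq fps_X_power_mult_nth using i j_def by simp
    also have "\<dots> = (if i = k then 1 else 0)" using key_coeff[OF Rphi p0, of j] i j_def by auto
    finally show "fps_deriv F $ i * (R ^ i * (fps_deriv R * phi ^ m)) $ k = (if i = k then fps_deriv F $ i else 0)" by simp
  qed
  also have "\<dots> = fps_deriv F $ k" by simp
  also have "\<dots> = of_nat m * F $ m" using k by simp
  finally show ?thesis using k by (simp add: F_def)
qed



fun w :: "nat \<Rightarrow> int \<Rightarrow> int \<Rightarrow> nat" where
  "w 0 a b = (if a = b \<and> 0 \<le> a then 1 else 0)"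
| "w (Suc m) a b = (if a < 0 then 0 else w m (a-2) b + w m (a-1) b + w m (a+1) b + w m (a+2) b)"

lemma w_neg1: "a < 0 \<Longrightarrow> w m a b = 0"
  by (cases m) auto

lemma w_neg2: "b < 0 \<Longrightarrow> w m a b = 0"
  by (induction m arbitrary: a) auto

lemma w_last: "w (Suc m) a b = (if b < 0 then 0 else w m a (b-2) + w m a (b-1) + w m a (b+1) + w m a (b+2))"
proof (induction m arbitrary: a b)
  case 0
  then show ?case by auto
next
  case (Suc m)
  show ?case
  proof (cases "a < 0")
    case True
    then show ?thesis by (simp add: w_neg1)
  next
    case False
    show ?thesis
      apply (simp only: w.simps(2)[of "Suc m" a b] w.simps(2)[of m a "b-2"] w.simps(2)[of m a "b-1"]
          w.simps(2)[of m a "b+1"] w.simps(2)[of m a "b+2"] if_not_P[OF False] if_False)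
      apply (simp only: Suc.IH)
      apply (cases "b < 0")
       apply (simp_all only: if_True if_False add_0)
      done
  qed
qed

lemma w_sym: "w m a b = w m b a"
proof (induction m arbitrary: a b)
  case 0
  then show ?case by auto
next
  case (Suc m)
  show ?case
  proof (cases "a < 0")
    case True
    then show ?thesis by (simp only: w_last[of m b a] w.simps(2)[of m a b] True if_True)
  next
    case False
    have "w (Suc m) a b = w m (a-2) b + w m (a-1) b + w m (a+1) b + w m (a+2) b"
      using False by simp
    also have "\<dots> = w m b (a-2) + w m b (a-1) + w m b (a+1) + w m b (a+2)"
      using Suc.IH by metis
    also have "\<dots> = w (Suc m) b a" by (simp only: w_last[of m b a] if_not_P[OF False])
    finally show ?thesis .
  qed
qed

definition Sx :: "nat \<Rightarrow> int \<Rightarrow> int \<Rightarrow> int list set" where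
  "Sx m a b = {ys. length ys = m + 1 \<and> ys ! 0 = a \<and> ys ! m = b
      \<and> (\<forall>i\<in>{1..m}. ys ! i - ys ! (i - 1) \<in> {-2, -1, 1, 2})
      \<and> (\<forall>i\<le>m. ys ! i \<ge> 0)}"

lemma Sx0: "Sx 0 a b = (if a = b \<and> 0 \<le> a then {[a]} else {})"
  by (auto simp: Sx_def length_Suc_conv)

lemma Sx_Suc:
  "Sx (Suc m) a b = (if a < 0 then {} else
     (\<Union>s\<in>{-2,-1,1,2::int}. (Cons a) ` Sx m (a+s) b))"
proof (cases "a < 0")
  case True
  then show ?thesis by (auto simp: Sx_def)
next
  case False
  have "ys \<in> Sx (Suc m) a b \<longleftrightarrow> (\<exists>s\<in>{-2,-1,1,2::int}. ys \<in> (Cons a) ` Sx m (a+s) b)" for ys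
  proof
    assume ys: "ys \<in> Sx (Suc m) a b"
    then obtain zs where zs: "ys = a # zs" "length zs = m + 1"
      by (cases ys) (auto simp: Sx_def)
    have "(1::nat) \<in> {1..Suc m}" by simp
    with ys have "ys ! 1 - ys ! (1-1) \<in> {-2,-1,1,2}" unfolding Sx_def by blast
    hence st: "zs ! 0 - a \<in> {-2,-1,1,2}" using zs by simp
    have "zs \<in> Sx m (a + (zs ! 0 - a)) b"
      unfolding Sx_def
    proof (intro CollectI conjI ballI allI impI)
      show "length zs = m + 1" by fact
      show "zs ! 0 = a + (zs ! 0 - a)" by simp
      show "zs ! m = b" using ys zs by (auto simp: Sx_def)
    next
      fix i assume i: "i \<in> {1..m}"
      hence si: "Suc i \<in> {1..Suc m}" by auto
      have A: "\<forall>i\<in>{1..Suc m}. ys ! i - ys ! (i - 1) \<in> {-2,-1,1,2}" using ys unfolding Sx_def by blast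
      have "ys ! Suc i - ys ! (Suc i - 1) \<in> {-2,-1,1,2}" using A si by blast
      thus "zs ! i - zs ! (i - 1) \<in> {-2,-1,1,2}" using zs i by (cases i) auto
    next
      fix i assume "i \<le> m"
      hence "ys ! Suc i \<ge> 0" using ys by (auto simp: Sx_def)
      thus "zs ! i \<ge> 0" using zs by simp
    qed
    thus "\<exists>s\<in>{-2,-1,1,2::int}. ys \<in> (Cons a) ` Sx m (a+s) b" using st zs by blast
  next
    assume "\<exists>s\<in>{-2,-1,1,2::int}. ys \<in> (Cons a) ` Sx m (a+s) b"
    then obtain s zs where s: "s \<in> {-2,-1,1,2}" and zs: "zs \<in> Sx m (a+s) b" and ys: "ys = a # zs"
      by blast
    show "ys \<in> Sx (Suc m) a b"
      unfolding Sx_def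
    proof (intro CollectI conjI ballI allI impI)
      show "length ys = Suc m + 1" using zs ys by (simp add: Sx_def)
      show "ys ! 0 = a" using ys by simp
      show "ys ! Suc m = b" using zs ys by (simp add: Sx_def)
    next
      fix i assume i: "i \<in> {1..Suc m}"
      show "ys ! i - ys ! (i - 1) \<in> {-2,-1,1,2}"
      proof (cases "i = 1")
        case True
        then show ?thesis using ys zs s by (auto simp: Sx_def)
      next
        case False
        then obtain j where j: "i = Suc j" "j \<in> {1..m}" using i by (cases i) auto
        then show ?thesis using ys zs by (auto simp: Sx_def)
      qed
    next
      fix i assume i: "i \<le> Suc m"
      show "ys ! i \<ge> 0"
      proof (cases i)
        case 0
        then show ?thesis using ys False by simp
      next
        case (Suc j)
        then show ?thesis using ys zs i by (auto simp: Sx_def)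
      qed
    qed
  qed
  then show ?thesis using False by auto
qed

lemma Sx_disj: "c \<noteq> d \<Longrightarrow> Sx m c b \<inter> Sx m d b = {}"
  by (auto simp: Sx_def)

lemma finite_card_S: "finite (Sx m a b) \<and> card (Sx m a b) = w m a b"
proof (induction m arbitrary: a)
  case 0
  then show ?case by (simp add: Sx0)
next
  case (Suc m)
  show ?case
  proof (cases "a < 0")
    case True
    then show ?thesis by (simp add: Sx_Suc)
  next
    case False
    have img: "card ((Cons a) ` A) = card A" for A :: "int list set"
      by (rule card_image) (simp add: inj_on_def)
    have fin: "finite ((Cons a) ` Sx m c b)" for c using Suc by simp
    have dj: "(Cons a) ` Sx m c b \<inter> (Cons a) ` Sx m d b = {}" if "c \<noteq> d" for c d
      using Sx_disj[OF that, of m b] by auto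
    have eq: "(\<Union>s\<in>{-2,-1,1,2::int}. (Cons a) ` Sx m (a+s) b) =
       (Cons a) ` Sx m (a-2) b \<union> ((Cons a) ` Sx m (a-1) b \<union> ((Cons a) ` Sx m (a+1) b \<union> (Cons a) ` Sx m (a+2) b))"
      by auto
    have d1: "(Cons a) ` Sx m (a+1) b \<inter> (Cons a) ` Sx m (a+2) b = {}" using dj by simp
    have d2: "(Cons a) ` Sx m (a-1) b \<inter> ((Cons a) ` Sx m (a+1) b \<union> (Cons a) ` Sx m (a+2) b) = {}"
      using dj[of "a-1" "a+1"] dj[of "a-1" "a+2"] by auto
    have d3: "(Cons a) ` Sx m (a-2) b \<inter> ((Cons a) ` Sx m (a-1) b \<union> ((Cons a) ` Sx m (a+1) b \<union> (Cons a) ` Sx m (a+2) b)) = {}"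
      using dj[of "a-2" "a-1"] dj[of "a-2" "a+1"] dj[of "a-2" "a+2"] by auto
    show ?thesis
      using False Suc
      by (simp only: Sx_Suc eq if_False card_Un_disjoint[OF fin finite_UnI[OF fin finite_UnI[OF fin fin]] d3]
          card_Un_disjoint[OF fin finite_UnI[OF fin fin] d2] card_Un_disjoint[OF fin fin d1] img)
         (simp add: fin)
  qed
qed

lemma card_exc: "card (basketball_excursions n) = w n 0 0"
proof -
  have "basketball_excursions n = Sx n 0 0" by (simp add: basketball_excursions_def Sx_def)
  thus ?thesis using finite_card_S by simp
qed


definition cw :: "nat \<Rightarrow> int \<Rightarrow> nat" where "cw k h = w k h 0 + w k h 1"

definition SS :: "nat \<Rightarrow> int \<Rightarrow> int \<Rightarrow> nat" where
  "SS m h b = (case m of 0 \<Rightarrow> 0 | Suc m' \<Rightarrow> (\<Sum>k=0..m'. cw k h * w (m' - k) 0 (b+1)))"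

lemma cw_neg: "h < 0 \<Longrightarrow> cw k h = 0" by (simp add: cw_def w_neg1)

lemma SS_neg: "h < 0 \<Longrightarrow> SS m h b = 0" by (simp add: SS_def cw_neg split: nat.split)

lemma cw_Suc: "0 \<le> h \<Longrightarrow> cw (Suc k) h = cw k (h-2) + cw k (h-1) + cw k (h+1) + cw k (h+2)"
  by (simp add: cw_def)

lemma SS_Suc: "0 \<le> h \<Longrightarrow> SS (Suc m) h b = cw 0 h * w m 0 (b+1) + SS m (h-2) b + SS m (h-1) b + SS m (h+1) b + SS m (h+2) b"
proof (cases m)
  case 0
  then show ?thesis by (simp add: SS_def)
next
  case (Suc m')
  assume h: "0 \<le> h"
  have "SS (Suc m) h b = (\<Sum>k=0..Suc m'. cw k h * w (Suc m' - k) 0 (b+1))"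
    by (simp add: SS_def Suc)
  also have "\<dots> = cw 0 h * w (Suc m') 0 (b+1) + (\<Sum>k=0..m'. cw (Suc k) h * w (m' - k) 0 (b+1))"
    by (subst sum.atLeast0_atMost_Suc_shift) simp
  also have "(\<Sum>k=0..m'. cw (Suc k) h * w (m' - k) 0 (b+1)) =
     (\<Sum>k=0..m'. cw k (h-2) * w (m' - k) 0 (b+1)) + (\<Sum>k=0..m'. cw k (h-1) * w (m' - k) 0 (b+1))
     + (\<Sum>k=0..m'. cw k (h+1) * w (m' - k) 0 (b+1)) + (\<Sum>k=0..m'. cw k (h+2) * w (m' - k) 0 (b+1))"
    by (simp add: cw_Suc[OF h] sum.distrib algebra_simps)
  finally show ?thesis by (simp add: SS_def Suc)
qed

lemma first_passage: "0 \<le> h \<Longrightarrow> w n (h+1) (b+1) = w n h b + SS n h b"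
proof (induction n arbitrary: h)
  case 0
  then show ?case by (simp add: SS_def)
next
  case (Suc m)
  have IH: "w m (g+1) (b+1) = w m g b + SS m g b" if "0 \<le> g" for g using Suc.IH that by blast
  have h: "0 \<le> h" by fact
  have L: "w (Suc m) (h+1) (b+1) = w m (h-1) (b+1) + w m h (b+1) + w m (h+2) (b+1) + w m (h+3) (b+1)"
    using h by (simp add: add_ac)
  have R: "w (Suc m) h b + SS (Suc m) h b = (w m (h-2) b + w m (h-1) b + w m (h+1) b + w m (h+2) b)
     + (cw 0 h * w m 0 (b+1) + SS m (h-2) b + SS m (h-1) b + SS m (h+1) b + SS m (h+2) b)"
    using h by (simp add: SS_Suc)
  have e1: "w m (h+2) (b+1) = w m (h+1) b + SS m (h+1) b" using IH[of "h+1"] h by (simp add: add_ac)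
  have e2: "w m (h+3) (b+1) = w m (h+2) b + SS m (h+2) b" using IH[of "h+2"] h by (simp add: add_ac)
  consider "h = 0" | "h = 1" | "h \<ge> 2" using h by linarith
  then show ?case
  proof cases
    case 1
    have "cw 0 h = 1" using 1 by (simp add: cw_def)
    then show ?thesis unfolding L R e1 e2 using 1 IH[of 0]
      by (simp add: w_neg1 SS_neg)
  next
    case 2
    have "cw 0 h = 1" using 2 by (simp add: cw_def)
    then show ?thesis unfolding L R e1 e2 using 2 IH[of 0] IH[of 1]
      by (simp add: w_neg1 SS_neg)
  next
    case 3
    have "cw 0 h = 0" using 3 by (simp add: cw_def)
    moreover have "w m (h-1) (b+1) = w m (h-2) b + SS m (h-2) b" using IH[of "h-2"] 3 by simp
    moreover have "w m h (b+1) = w m (h-1) b + SS m (h-1) b" using IH[of "h-1"] 3 by simp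
    ultimately show ?thesis unfolding L R e1 e2 by simp
  qed
qed




definition Wf :: "int \<Rightarrow> int \<Rightarrow> real fps" where
  "Wf h b = Abs_fps (\<lambda>n. real (w n h b))"

lemma Wf_nth: "Wf h b $ n = real (w n h b)" by (simp add: Wf_def)

lemma Wf_neg2: "b < 0 \<Longrightarrow> Wf h b = 0"
  by (rule fps_ext) (simp add: Wf_nth w_neg2)

lemma Wf_sym: "Wf h b = Wf b h"
  by (rule fps_ext) (simp add: Wf_nth w_sym[of _ h b])

lemma Wf_00: "Wf 0 0 = 1 + fps_X * (Wf 1 0 + Wf 2 0)"
proof (rule fps_ext)
  fix n show "Wf 0 0 $ n = (1 + fps_X * (Wf 1 0 + Wf 2 0)) $ n"
    by (cases n) (simp_all add: Wf_nth w_neg1)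
qed

lemma Wf_fp: assumes h: "0 \<le> h"
  shows "Wf (h+1) (b+1) = Wf h b + fps_X * (Wf h 0 + Wf h 1) * Wf 0 (b+1)"
proof (rule fps_ext)
  fix n
  show "Wf (h+1) (b+1) $ n = (Wf h b + fps_X * (Wf h 0 + Wf h 1) * Wf 0 (b+1)) $ n"
  proof (cases n)
    case 0
    then show ?thesis using first_passage[OF h, of 0 b] by (simp add: Wf_nth SS_def)
  next
    case (Suc m)
    have "(fps_X * (Wf h 0 + Wf h 1) * Wf 0 (b+1)) $ n = ((Wf h 0 + Wf h 1) * Wf 0 (b+1)) $ m"
      using Suc by (simp add: mult.assoc)
    also have "\<dots> = real (SS n h b)"
      using Suc by (simp add: fps_mult_nth SS_def cw_def Wf_nth)
    finally show ?thesis using first_passage[OF h, of n b] by (simp add: Wf_nth)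
  qed
qed

lemma E_eq:
  defines "E \<equiv> Wf 0 0" and "Y \<equiv> fps_X * Wf 0 0"
  shows "Y * (1 - Y)^2 = fps_X * (1 - Y + Y^2)^2"
proof -
  define V where "V = Wf 0 1"
  define W11 where "W11 = Wf 1 1"
  define W20 where "W20 = Wf 2 0"
  have a: "V = fps_X * (E + V) * E"
    using Wf_fp[of 0 "-1"] Wf_sym[of 1 0] by (simp add: V_def E_def Wf_neg2)
  have b: "W11 = E + fps_X * (E + V) * V"
    using Wf_fp[of 0 0] by (simp add: V_def E_def W11_def)
  have cc: "W20 = fps_X * (V + W11) * E"
    using Wf_fp[of 1 "-1"] Wf_sym[of 1 0] by (simp add: V_def E_def W11_def W20_def Wf_neg2)
  have d: "E = 1 + fps_X * (V + W20)"
    using Wf_00 Wf_sym[of 1 0] by (simp add: V_def E_def W20_def)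
  define u where "u = 1 - Y"
  have Vu: "V * u = fps_X * E^2"
    using a by (simp add: u_def Y_def E_def[symmetric] algebra_simps power2_eq_square)
  have EVu: "(E + V) * u = E"
    using Vu by (simp add: u_def Y_def E_def[symmetric] algebra_simps power2_eq_square)
  have E2: "E = 1 + fps_X * V + fps_X^2 * E * (E + V) * (1 + fps_X * V)"
    using d cc b by (simp add: algebra_simps power2_eq_square)
  have "E * u^2 = u^2 + fps_X * (V * u) * u + fps_X^2 * E * ((E + V) * u) * (u + fps_X * (V * u))"
    by (subst E2) (simp add: algebra_simps power2_eq_square)
  also have "\<dots> = (u + Y^2)^2"
    unfolding Vu EVu by (simp add: Y_def E_def[symmetric] algebra_simps power2_eq_square power3_eq_cube)
  finally have "E * u^2 = (u + Y^2)^2" .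
  hence "fps_X * E * u^2 = fps_X * (u + Y^2)^2" by (simp add: mult.assoc)
  thus ?thesis by (simp add: u_def Y_def E_def[symmetric] algebra_simps)
qed


lemma unique_inv:
  fixes Rp Z :: "real fps"
  assumes R0: "Rp $ 0 = 0" and R1: "Rp $ 1 \<noteq> 0" and Z0: "Z $ 0 = 0" and RZ: "Rp oo Z = fps_X"
  shows "Z = fps_inv Rp"
proof -
  have "Z = fps_X oo Z" using Z0 by simp
  also have "\<dots> = (fps_inv Rp oo Rp) oo Z" using fps_inv[OF R0 R1] by simp
  also have "\<dots> = fps_inv Rp oo (Rp oo Z)" using fps_compose_assoc[OF Z0 R0] by simp
  also have "\<dots> = fps_inv Rp" using RZ by simp
  finally show ?thesis .
qed

definition T1 :: "real fps" where "T1 = inverse (1 - fps_X)"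
definition psi :: "real fps" where "psi = 1 + fps_X^2 * T1"
definition phi :: "real fps" where "phi = psi^2"
definition RR :: "real fps" where "RR = fps_X * inverse phi"
definition YY :: "real fps" where "YY = fps_X * Wf 0 0"

lemma psi0: "psi $ 0 = 1" by (simp add: psi_def)
lemma phi0: "phi $ 0 = 1" by (simp add: phi_def psi0 fps_square_nth)

lemma RR_phi: "RR * phi = fps_X"
  using inverse_mult_eq_1[of phi] phi0 by (simp add: RR_def mult.assoc)

lemma RR0: "RR $ 0 = 0" by (simp add: RR_def)
lemma RR1: "RR $ 1 = 1" by (simp add: RR_def phi0)
lemma YY0: "YY $ 0 = 0" by (simp add: YY_def)

lemma RR_YY: "RR oo YY = fps_X"
proof -
  define P where "P = 1 + YY^2 * inverse (1 - YY)"
  have P0: "P $ 0 = 1" using YY0 by (simp add: P_def fps_square_nth)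
  have psiY: "psi oo YY = P"
    using YY0 by (simp add: psi_def P_def T1_def fps_compose_add_distrib fps_compose_mult_distrib
        fps_compose_power[symmetric] fps_inverse_compose fps_compose_sub_distrib)
  have phiY: "phi oo YY = P^2"
    using YY0 psiY by (simp add: phi_def fps_compose_power[symmetric])
  have iphiY: "inverse phi oo YY = inverse (P^2)"
    using YY0 phi0 phiY by (simp add: fps_inverse_compose)
  have Q: "P * (1 - YY) = 1 - YY + YY^2"
  proof -
    have i: "inverse (1 - YY) * (1 - YY) = 1" using YY0 by (intro inverse_mult_eq_1) simp
    have "P * (1 - YY) = (1 - YY) + YY^2 * (inverse (1 - YY) * (1 - YY))"
      by (simp add: P_def distrib_right mult.assoc)
    thus ?thesis unfolding i by simp
  qed
  have "(fps_X * P^2) * (1 - YY)^2 = YY * (1 - YY)^2"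
    using E_eq Q by (simp add: YY_def power_mult_distrib[symmetric] mult.assoc)
  moreover have "(1 - YY)^2 \<noteq> 0"
  proof -
    have "((1 - YY)^2) $ 0 = 1" using YY0 by (simp add: fps_square_nth)
    thus ?thesis by auto
  qed
  ultimately have Y: "YY = fps_X * P^2" by simp
  have "RR oo YY = YY * inverse (P^2)"
    using YY0 iphiY by (simp add: RR_def fps_compose_mult_distrib)
  also have "\<dots> = fps_X" 
  proof -
    have "P^2 * inverse (P^2) = 1" using P0 by (intro inverse_mult_eq_1') (simp add: fps_square_nth)
    thus ?thesis by (subst Y) (simp add: mult.assoc)
  qed
  finally show ?thesis .
qed

lemma YY_inv: "YY = fps_inv RR"
  using unique_inv[OF RR0 _ YY0 RR_YY] RR1 by simp

lemma count_phi: "real (n+1) * real (w n 0 0) = (phi ^ (n+1)) $ n"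
proof -
  have GR: "fps_inv RR oo RR = fps_X" using fps_inv[OF RR0] RR1 by simp
  have "real (n+1) * (fps_X oo fps_inv RR) $ (n+1) = (fps_deriv fps_X * phi ^ (n+1)) $ (n + 1 - 1)"
    using lagrange_buermann[OF RR_phi _ GR, of "n+1" fps_X] phi0 by simp
  moreover have "fps_X oo fps_inv RR = YY" using YY_inv YY0 by simp
  ultimately show ?thesis by (simp add: YY_def Wf_nth)
qed

lemma T1_pow_nth: "(T1 ^ i) $ k = real ((i + k - 1) choose k)"
proof (cases "i = 0")
  case True
  then show ?thesis by (cases k) simp_all
next
  case False
  have "T1 ^ i = inverse ((1 - fps_const 1 * fps_X) ^ i)"
    by (simp add: T1_def fps_inverse_power)
  also have "\<dots> = Abs_fps (\<lambda>k. of_nat ((i + k - 1) choose k) * 1^k)"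
    using False by (intro one_minus_const_fps_X_neg_power') simp
  finally show ?thesis by simp
qed

lemma psi_pow_nth: "(psi ^ N) $ n = (\<Sum>i\<le>N. real (N choose i) * (if n < 2*i then 0 else real ((n - i - 1) choose (n - 2*i))))"
proof -
  have "psi ^ N = (\<Sum>i\<le>N. of_nat (N choose i) * (fps_X^2 * T1)^i * 1^(N-i))"
    unfolding psi_def by (subst add.commute) (rule binomial_ring)
  hence "(psi ^ N) $ n = (\<Sum>i\<le>N. real (N choose i) * (fps_X^(2*i) * T1^i) $ n)"
    by (simp add: fps_sum_nth power_mult_distrib power_mult fps_of_nat mult.assoc)
  also have "\<dots> = (\<Sum>i\<le>N. real (N choose i) * (if n < 2*i then 0 else real ((n - i - 1) choose (n - 2*i))))"
  proof (intro sum.cong refl)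
    fix i
    have "i + (n - 2*i) - 1 = n - i - 1" if "\<not> n < 2*i" using that by simp
    thus "real (N choose i) * (fps_X^(2*i) * T1^i) $ n = real (N choose i) * (if n < 2*i then 0 else real ((n - i - 1) choose (n - 2*i)))"
      by (simp add: fps_X_power_mult_nth T1_pow_nth)
  qed
  finally show ?thesis .
qed


lemma ibinom_nat: "ibinom (int a) (int b) = real (a choose b)"
  by (simp add: ibinom_def binomial_gbinomial)

lemma formula2:
  "real (card (basketball_excursions n)) = 1 / (real n + 1) * (\<Sum>i=0..n div 2.
     ibinom (2 * int n + 2) (int i) * ibinom (int n - int i - 1) (int n - 2 * int i))"
proof -
  have "real (n+1) * real (card (basketball_excursions n)) = (psi ^ (2*n+2)) $ n"
  proof -
    have "phi ^ (n+1) = psi ^ (2*n+2)" unfolding phi_def power_mult[symmetric] by (simp add: algebra_simps)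
    thus ?thesis using count_phi[of n] by (simp add: card_exc)
  qed
  also have "\<dots> = (\<Sum>i\<le>2*n+2. real ((2*n+2) choose i) * (if n < 2*i then 0 else real ((n - i - 1) choose (n - 2*i))))"
    by (rule psi_pow_nth)
  also have "\<dots> = (\<Sum>i=0..n div 2. real ((2*n+2) choose i) * (if n < 2*i then 0 else real ((n - i - 1) choose (n - 2*i))))"
    by (rule sum.mono_neutral_right) auto
  also have "\<dots> = (\<Sum>i=0..n div 2. ibinom (2 * int n + 2) (int i) * ibinom (int n - int i - 1) (int n - 2 * int i))"
  proof (intro sum.cong refl)
    fix i assume i: "i \<in> {0..n div 2}"
    hence le: "2*i \<le> n" by auto
    have b1: "ibinom (2 * int n + 2) (int i) = real ((2*n+2) choose i)"
      using ibinom_nat[of "2*n+2" i] by (simp add: add.commute)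
    have b2: "ibinom (int n - int i - 1) (int n - 2 * int i) = real ((n - i - 1) choose (n - 2*i))"
    proof (cases "i < n")
      case True
      have "int n - int i - 1 = int (n - i - 1)" "int n - 2 * int i = int (n - 2*i)" using True le by auto
      thus ?thesis by (simp only: ibinom_nat)
    next
      case False
      hence "n = 0" "i = 0" using le by auto
      thus ?thesis by (simp add: ibinom_def)
    qed
    show "real ((2*n+2) choose i) * (if n < 2*i then 0 else real ((n - i - 1) choose (n - 2*i))) =
      ibinom (2 * int n + 2) (int i) * ibinom (int n - int i - 1) (int n - 2 * int i)"
      using le b1 b2 by simp
  qed
  finally show ?thesis by (simp add: field_simps)
qed


definition RB :: "real fps" where "RB = fps_X - fps_X^2"
definition BB :: "real fps" where "BB = fps_inv RB"
definition IB :: "real fps" where "IB = inverse (1 - BB)"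

lemma RB0: "RB $ 0 = 0" and RB1: "RB $ 1 = 1" by (simp_all add: RB_def power2_eq_square fps_mult_nth)

lemma BB0: "BB $ 0 = 0" by (simp add: BB_def fps_inv_def)

lemma BB_eq: "BB - BB^2 = fps_X"
proof -
  have "RB oo BB = fps_X" using fps_inv_right[OF RB0] RB1 by (simp add: BB_def)
  moreover have "RB oo BB = BB - BB^2"
    using BB0 by (simp add: RB_def fps_compose_sub_distrib fps_compose_power[OF BB0, symmetric])
  ultimately show ?thesis by simp
qed

lemma IB_mult: "IB * (1 - BB) = 1"
  unfolding IB_def using BB0 by (intro inverse_mult_eq_1) simp

lemma BB_XIB: "BB = fps_X * IB"
proof -
  have "BB * (1 - BB) = fps_X" using BB_eq by (simp add: algebra_simps power2_eq_square)
  have "BB = BB * (IB * (1 - BB))" using IB_mult by simp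
  also have "\<dots> = (BB * (1 - BB)) * IB" by (simp only: mult_ac)
  finally show ?thesis using \<open>BB * (1 - BB) = fps_X\<close> by simp
qed

lemma T1_mult: "T1 * (1 - fps_X) = 1"
  unfolding T1_def by (intro inverse_mult_eq_1) simp

lemma RB_T1: "RB * T1 = fps_X"
proof -
  have eq: "RB = fps_X * (1 - fps_X)" by (simp add: RB_def algebra_simps power2_eq_square)
  have "RB * T1 = fps_X * (T1 * (1 - fps_X))" unfolding eq by (simp only: mult_ac)
  thus ?thesis using T1_mult by simp
qed

lemma BB_pow_coeff: "real (k+n+2) * (BB ^ (n+2)) $ (k+n+2) = real (n+2) * real ((2*k+n+1) choose k)"
proof -
  have GR: "BB oo RB = fps_X" unfolding BB_def using fps_inv[OF RB0] RB1 by simp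
  have T0: "T1 $ 0 \<noteq> 0" by (simp add: T1_def)
  have "real (k+n+2) * (fps_X^(n+2) oo BB) $ (k+n+2) = (fps_deriv (fps_X^(n+2)) * T1 ^ (k+n+2)) $ (k+n+2-1)"
    by (rule lagrange_buermann[OF RB_T1 T0 GR]) simp
  moreover have "fps_X^(n+2) oo BB = BB^(n+2)"
  proof -
    have "fps_X^(n+2) oo BB = (fps_X oo BB)^(n+2)" by (rule fps_compose_power[OF BB0, symmetric])
    thus ?thesis using BB0 by simp
  qed
  moreover have "(fps_deriv (fps_X^(n+2)) * T1 ^ (k+n+2)) $ (k+n+2-1) = real (n+2) * (T1 ^ (k+n+2)) $ k"
    by (simp add: fps_deriv_power fps_X_power_mult_nth mult.assoc del: power_Suc)
  moreover have "(T1 ^ (k+n+2)) $ k = real ((2*k+n+1) choose k)"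
  proof -
    have e: "k+n+2+k-1 = 2*k+n+1" by simp
    show ?thesis using T1_pow_nth[of "k+n+2" k] unfolding e .
  qed
  ultimately show ?thesis by simp
qed

lemma deriv_IB_coeff: "(fps_deriv BB * IB ^ (n+1)) $ k = real ((n + 2*k + 1) choose k)"
proof -
  have "BB ^ (n+1) = fps_X ^ (n+1) * IB ^ (n+1)" by (simp only: power_mult_distrib[symmetric] BB_XIB[symmetric])
  have d: "fps_deriv (BB ^ (n+2)) = fps_const (real (n+2)) * (fps_X ^ (n+1) * (fps_deriv BB * IB ^ (n+1)))"
    using \<open>BB ^ (n+1) = _\<close> by (simp add: fps_deriv_power mult_ac del: power_Suc)
  have "fps_deriv (BB ^ (n+2)) $ (k+n+1) = of_nat (k+n+1+1) * (BB ^ (n+2)) $ (k+n+1+1)"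
    by (rule fps_deriv_nth)
  also have "k+n+1+1 = k+n+2" by simp
  finally have "fps_deriv (BB ^ (n+2)) $ (k+n+1) = real (k+n+2) * (BB ^ (n+2)) $ (k+n+2)" by simp
  also have "\<dots> = real (n+2) * real ((2*k+n+1) choose k)" by (rule BB_pow_coeff)
  finally have f: "(fps_const (real (n+2)) * (fps_X ^ (n+1) * (fps_deriv BB * IB ^ (n+1)))) $ (k+n+1) = real (n+2) * real ((2*k+n+1) choose k)"
    unfolding d .
  have "(fps_X ^ (n+1) * (fps_deriv BB * IB ^ (n+1))) $ (k+n+1) = (fps_deriv BB * IB ^ (n+1)) $ k"
    by (simp only: fps_X_power_mult_nth) simp
  hence "real (n+2) * (fps_deriv BB * IB ^ (n+1)) $ k = real (n+2) * real ((2*k+n+1) choose k)"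
    using f by (simp only: fps_mult_left_const_nth)
  moreover have "real (n+2) \<noteq> 0" by simp
  ultimately have "(fps_deriv BB * IB ^ (n+1)) $ k = real ((2*k+n+1) choose k)"
    by (metis mult_left_cancel)
  moreover have "n + 2*k + 1 = 2*k+n+1" by simp
  ultimately show ?thesis by metis
qed


definition R1 :: "real fps" where "R1 = RR oo BB"
definition phi1 :: "real fps" where "phi1 = (1 - fps_X)^2 * IB"

lemma IB0: "IB $ 0 = 1" using BB0 by (simp add: IB_def)
lemma phi10: "phi1 $ 0 = 1" using IB0 by (simp add: phi1_def fps_square_nth fps_mult_nth)

lemma R1_phi1: "R1 * phi1 = fps_X"
proof -
  define PB where "PB = 1 + BB^2 * IB"
  have psiB: "psi oo BB = PB"
    using BB0 by (simp add: psi_def PB_def T1_def IB_def fps_compose_add_distrib fps_compose_mult_distrib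
        fps_compose_power[symmetric] fps_inverse_compose fps_compose_sub_distrib)
  have phiB: "phi oo BB = PB^2"
    using BB0 psiB by (simp add: phi_def fps_compose_power[symmetric])
  have PB0: "(PB^2) $ 0 = 1" using BB0 by (simp add: PB_def fps_square_nth)
  have R1: "R1 = BB * inverse (PB^2)"
    using BB0 phi0 phiB by (simp add: R1_def RR_def fps_compose_mult_distrib fps_inverse_compose)
  have PBe: "PB = (1 - fps_X) * IB"
  proof -
    have "1 - fps_X = 1 - BB + BB^2" unfolding BB_eq[symmetric] by (simp add: algebra_simps)
    hence "(1 - fps_X) * IB = (1 - BB + BB^2) * IB" by simp
    also have "\<dots> = IB * (1 - BB) + BB^2 * IB" by (simp add: algebra_simps)
    also have "\<dots> = PB" using IB_mult by (simp add: PB_def)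
    finally show ?thesis by simp
  qed
  have "R1 * phi1 = fps_X * (PB^2 * inverse (PB^2))"
    unfolding R1 phi1_def PBe by (subst BB_XIB) (simp add: power2_eq_square mult_ac)
  also have "PB^2 * inverse (PB^2) = 1" using PB0 by (intro inverse_mult_eq_1') simp
  finally show ?thesis by simp
qed

lemma R10: "R1 $ 0 = 0" using R0_of[OF R1_phi1] phi10 by simp
lemma R11: "R1 $ 1 = 1"
proof -
  have "(R1 * phi1) $ 1 = 1" using R1_phi1 by simp
  thus ?thesis using R10 phi10 by (simp add: fps_mult_nth)
qed

lemma count_phi1: "real (n+1) * real (w n 0 0) = (fps_deriv BB * phi1 ^ (n+1)) $ n"
proof -
  define G1 where "G1 = fps_inv R1"
  have GR: "G1 oo R1 = fps_X" using fps_inv[OF R10] R11 by (simp add: G1_def)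
  have RG: "R1 oo G1 = fps_X" using fps_inv_right[OF R10] R11 by (simp add: G1_def)
  have G10: "G1 $ 0 = 0" by (simp add: G1_def fps_inv_def)
  have "RR oo (BB oo G1) = fps_X"
    using fps_compose_assoc[OF G10 BB0, of RR] RG by (simp add: R1_def)
  hence BG: "BB oo G1 = YY"
    using unique_inv[OF RR0 _ _, of "BB oo G1"] RR1 BB0 YY_inv by simp
  have "real (n+1) * (BB oo G1) $ (n+1) = (fps_deriv BB * phi1 ^ (n+1)) $ (n + 1 - 1)"
    using lagrange_buermann[OF R1_phi1 _ GR, of "n+1" BB] phi10 by simp
  thus ?thesis using BG by (simp add: YY_def Wf_nth)
qed


lemma one_minus_X_pow_nth: "((1 - fps_X :: real fps) ^ N) $ i = (-1)^i * real (N choose i)"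
proof (induction N arbitrary: i)
  case 0
  then show ?case by (cases i) simp_all
next
  case (Suc N)
  have "((1 - fps_X :: real fps) ^ Suc N) $ i = ((1 - fps_X)^N) $ i - (fps_X * (1 - fps_X)^N) $ i"
    by (simp add: algebra_simps)
  also have "\<dots> = (-1)^i * real (Suc N choose i)"
  proof (cases i)
    case 0
    then show ?thesis using Suc.IH[of 0] by simp
  next
    case (Suc j)
    then show ?thesis using Suc.IH[of i] Suc.IH[of j] by (simp add: algebra_simps)
  qed
  finally show ?case .
qed

lemma formula1:
  "real (card (basketball_excursions n)) = 1 / (real n + 1) * (\<Sum>k=0..n. (-1) ^ (n + k)
     * ibinom (2 * int n + 2) (int n - int k) * ibinom (int n + 2 * int k + 1) (int k))"
proof -
  have p0: "phi1 ^ (n+1) = (1 - fps_X)^(2*(n+1)) * IB^(n+1)"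
    by (simp only: phi1_def power_mult_distrib power_mult[symmetric])
  have "2*(n+1) = 2*n+2" by simp
  hence p: "phi1 ^ (n+1) = (1 - fps_X)^(2*n+2) * IB^(n+1)" using p0 by simp
  have "real (n+1) * real (card (basketball_excursions n)) = (fps_deriv BB * phi1 ^ (n+1)) $ n"
    using count_phi1[of n] by (simp add: card_exc)
  also have "\<dots> = ((1 - fps_X)^(2*n+2) * (fps_deriv BB * IB^(n+1))) $ n"
    unfolding p by (simp only: mult_ac)
  also have "\<dots> = (\<Sum>j=0..n. ((1 - fps_X)^(2*n+2)) $ j * (fps_deriv BB * IB^(n+1)) $ (n - j))"
    by (rule fps_mult_nth)
  also have "\<dots> = (\<Sum>j=0..n. (-1)^j * real ((2*n+2) choose j) * real ((n + 2*(n-j) + 1) choose (n-j)))"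
    by (simp only: one_minus_X_pow_nth deriv_IB_coeff)
  also have "\<dots> = (\<Sum>k=0..n. (-1) ^ (n + k)
     * ibinom (2 * int n + 2) (int n - int k) * ibinom (int n + 2 * int k + 1) (int k))"
  proof -
    have "(\<Sum>k=0..n. (-1) ^ (n + k) * ibinom (2 * int n + 2) (int n - int k) * ibinom (int n + 2 * int k + 1) (int k))
       = (\<Sum>j=0..n. (-1) ^ (n + (n + 0 - j)) * ibinom (2 * int n + 2) (int n - int (n + 0 - j)) * ibinom (int n + 2 * int (n + 0 - j) + 1) (int (n + 0 - j)))"
      by (rule sum.atLeastAtMost_rev)
    also have "\<dots> = (\<Sum>j=0..n. (-1)^j * real ((2*n+2) choose j) * real ((n + 2*(n-j) + 1) choose (n-j)))"
    proof (intro sum.cong refl)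
      fix j assume j: "j \<in> {0..n}"
      have s: "(-1::real) ^ (n + (n + 0 - j)) = (-1)^j"
      proof -
        have e: "n + (n + 0 - j) = 2 * (n - j) + j" using j by auto
        show ?thesis by (simp only: e power_add power_mult) simp
      qed
      have b1: "ibinom (2 * int n + 2) (int n - int (n + 0 - j)) = real ((2*n+2) choose j)"
        using ibinom_nat[of "2*n+2" j] j by (simp add: add.commute of_nat_diff)
      have b2: "ibinom (int n + 2 * int (n + 0 - j) + 1) (int (n + 0 - j)) = real ((n + 2*(n-j) + 1) choose (n-j))"
        using ibinom_nat[of "n + 2*(n-j) + 1" "n-j"] j by (simp add: add.commute)
      show "(-1) ^ (n + (n + 0 - j)) * ibinom (2 * int n + 2) (int n - int (n + 0 - j)) * ibinom (int n + 2 * int (n + 0 - j) + 1) (int (n + 0 - j))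
         = (-1)^j * real ((2*n+2) choose j) * real ((n + 2*(n-j) + 1) choose (n-j))"
        unfolding s b1 b2 ..
    qed
    finally show ?thesis by simp
  qed
  finally show ?thesis by (simp add: field_simps)
qed

theorem proposition3p7:
  fixes n :: nat
  shows "real (card (basketball_excursions n))
           = 1 / (real n + 1) * (\<Sum>k=0..n. (-1) ^ (n + k)
               * ibinom (2 * int n + 2) (int n - int k) * ibinom (int n + 2 * int k + 1) (int k))
       \<and> real (card (basketball_excursions n))
           = 1 / (real n + 1) * (\<Sum>i=0..n div 2.
               ibinom (2 * int n + 2) (int i) * ibinom (int n - int i - 1) (int n - 2 * int i))"
  using formula1 formula2 by blast


end
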